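(* Fix $\alpha\in[\tfrac12,1)$. After any sequence of insert, delete and get operations (with counter-based rebuilding), a SAIT storing $n$ keys with total number of accesses $m$ uses $O(m^{\alpha}\cdot n)$ memory.
   Context: A Generic Self-Adjusting Tree (GSAT) with degree function $D$ for a set of integer keys with access counts $ac_i\ge1$ consists of $m=\sum_i ac_i$, an array of $k\le\lceil D(m)\rceil$ representative keys with their access counts, and $k+1$ child subtrees that are GSATs for the keys lying strictly before the first representative, strictly between consecutive representatives, and strictly after the last; every node stores at least one key. A GSAT is ideal if each child $T_j$ of the root satisfies $m(T_j)\le m/(D(m)+1)$, where $m(T_j)$ is the total access count of keys in $T_j$, and each child is ideal. A SAIT is a GSAT with $D(m)=\sqrt m$ in which each node whose subtree has total access count $m'$ at the time of its construction stores an interpolation array $ID$ of size $\lceil m'^{\alpha}\rceil$ and otherwise $O(D(m'))$ data. Dynamic operations: each node $v$ has a counter $C(v)$ and $im(T_v)$, the value of $m(T_v)$ at the last (re)build of $T_v$; an operation on key $x$ walks the search path, increments counters of visited nodes and the access count of $x$ (insert of an absent key adds a new constant-size node holding $x$ with count 1, delete only marks the key); then the shallowest visited $u$ with $C(u)>im(T_u)/4$ (if any) has $T_u$ rebuilt into an ideal SAIT of its unmarked keys, resetting counters to $0$ and $im$ values. *)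

theory Defs
  imports Complex_Main "HOL-Library.Multiset"
begin

text \<open>A node is  Node im c rs ks  where
  im = m(T_v) at the last (re)build of the subtree rooted at v (this is also the
       value m' that determines the size of the interpolation array ID of v),
  c  = the counter C(v),
  rs = the array of representatives (key, access count, deletion mark), and
  ks = the k+1 child subtrees.\<close>

datatype sait = Leaf | Node nat nat "(int \<times> nat \<times> bool) list" "sait list"

datatype sop = Ins int | Del int | Get int

fun opkey :: "sop \<Rightarrow> int" where
  "opkey (Ins x) = x" | "opkey (Del x) = x" | "opkey (Get x) = x"

fun entries :: "sait \<Rightarrow> (int \<times> nat \<times> bool) list" where
  "entries Leaf = []"
| "entries (Node im c rs ks) = rs @ concat (map entries ks)"

definition msum :: "sait \<Rightarrow> nat" where
  "msum t = sum_list (map (\<lambda>(x, a, d). a) (entries t))"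

definition keys :: "sait \<Rightarrow> int set" where
  "keys t = fst ` set (entries t)"

definition nkeys :: "sait \<Rightarrow> nat" where
  "nkeys t = length (entries t)"

text \<open>GSAT with degree function D(m) = sqrt m (search-tree structure).\<close>
fun gsat :: "sait \<Rightarrow> bool" where
  "gsat Leaf = True"
| "gsat (Node im c rs ks) =
     (rs \<noteq> [] \<and>
      real (length rs) \<le> of_int \<lceil>sqrt (real (msum (Node im c rs ks)))\<rceil> \<and>
      length ks = length rs + 1 \<and>
      sorted_wrt (<) (map fst rs) \<and>
      (\<forall>(x, a, d) \<in> set rs. 1 \<le> a) \<and>
      (\<forall>j < length ks. \<forall>y \<in> keys (ks ! j).
          (0 < j \<longrightarrow> fst (rs ! (j - 1)) < y) \<and> (j < length rs \<longrightarrow> y < fst (rs ! j))) \<and>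
      (\<forall>k \<in> set ks. gsat k))"

fun ideal :: "sait \<Rightarrow> bool" where
  "ideal Leaf = True"
| "ideal (Node im c rs ks) =
     (\<forall>k \<in> set ks. real (msum k) \<le> real (msum (Node im c rs ks)) / (sqrt (real (msum (Node im c rs ks))) + 1)
        \<and> ideal k)"

fun fresh :: "sait \<Rightarrow> bool" where
  "fresh Leaf = True"
| "fresh (Node im c rs ks) =
     (im = msum (Node im c rs ks) \<and> c = 0 \<and> (\<forall>(x, a, d) \<in> set rs. \<not> d) \<and> (\<forall>k \<in> set ks. fresh k))"

definition rebuild_of :: "sait \<Rightarrow> sait \<Rightarrow> bool" where
  "rebuild_of t t' \<longleftrightarrow> gsat t' \<and> ideal t' \<and> fresh t' \<and>
     mset (map (\<lambda>(x, a, d). (x, a)) (entries t')) =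
     mset (map (\<lambda>(x, a, d). (x, a)) (filter (\<lambda>(x, a, d). \<not> d) (entries t)))"

fun upd_entry :: "sop \<Rightarrow> int \<times> nat \<times> bool \<Rightarrow> int \<times> nat \<times> bool" where
  "upd_entry (Ins y) (x, a, d) = (x, a + 1, False)"
| "upd_entry (Del y) (x, a, d) = (x, a + 1, True)"
| "upd_entry (Get y) (x, a, d) = (x, a + 1, d)"

definition child_idx :: "int \<Rightarrow> (int \<times> nat \<times> bool) list \<Rightarrow> nat" where
  "child_idx x rs = length (filter (\<lambda>y. y < x) (map fst rs))"

function access :: "sop \<Rightarrow> sait \<Rightarrow> sait" where
  "access (Ins x) Leaf = Node 1 0 [(x, 1, False)] [Leaf, Leaf]"
| "access (Del x) Leaf = Leaf"
| "access (Get x) Leaf = Leaf"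
| "access p (Node im c rs ks) =
     (if opkey p \<in> fst ` set rs
      then Node im (c + 1) (map (\<lambda>e. if fst e = opkey p then upd_entry p e else e) rs) ks
      else (let j = child_idx (opkey p) rs in
            if j < length ks then Node im (c + 1) rs (ks[j := access p (ks ! j)])
            else Node im (c + 1) rs ks))"
  by pat_completeness auto
termination
  by (relation "measure (\<lambda>(p, t). size t)")
     (auto simp: less_Suc_eq_le intro!: size_list_estimation' nth_mem)

text \<open>After the walk: the shallowest visited node u with C(u) > im(T_u)/4 (if any)
  has its subtree rebuilt into an ideal SAIT of its unmarked keys.\<close>
inductive settle :: "int \<Rightarrow> sait \<Rightarrow> sait \<Rightarrow> bool" where
  leaf: "settle x Leaf Leaf"
| rebuild: "4 * c > im \<Longrightarrow> rebuild_of (Node im c rs ks) t' \<Longrightarrow> settle x (Node im c rs ks) t'"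
| found: "\<not> 4 * c > im \<Longrightarrow> x \<in> fst ` set rs \<Longrightarrow> settle x (Node im c rs ks) (Node im c rs ks)"
| down: "\<not> 4 * c > im \<Longrightarrow> x \<notin> fst ` set rs \<Longrightarrow> child_idx x rs < length ks \<Longrightarrow>
         settle x (ks ! child_idx x rs) t' \<Longrightarrow>
         settle x (Node im c rs ks) (Node im c rs (ks[child_idx x rs := t']))"

text \<open>Reachable states, together with the total number of accesses m so far
  (= initial total access count plus all increments of access counts by operations).\<close>
inductive reach :: "sait \<Rightarrow> nat \<Rightarrow> bool" where
  init: "gsat t \<Longrightarrow> ideal t \<Longrightarrow> fresh t \<Longrightarrow> reach t (msum t)"
| step: "reach t M \<Longrightarrow> settle (opkey p) (access p t) t' \<Longrightarrow>
         reach t' (M + (msum (access p t) - msum t))"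

text \<open>Memory: each node stores ID of size ceil(im^alpha) plus its representative array
  (key, count, mark), child pointers and two counters (O(D(im)) data).\<close>
fun mem :: "real \<Rightarrow> sait \<Rightarrow> nat" where
  "mem \<alpha> Leaf = 0"
| "mem \<alpha> (Node im c rs ks) =
     nat \<lceil>real im powr \<alpha>\<rceil> + 3 * length rs + length ks + 2 + sum_list (map (mem \<alpha>) ks)"

end

theory Submission
  imports Defs
begin

fun inv :: "nat \<Rightarrow> sait \<Rightarrow> bool" where
  "inv N Leaf = True"
| "inv N (Node im c rs ks) = (rs \<noteq> [] \<and> length ks = length rs + 1 \<and> 1 \<le> im \<and> im \<le> N
      \<and> (\<forall>k\<in>set ks. inv N k))"

lemma msum_Leaf[simp]: "msum Leaf = 0" by (simp add: msum_def)

lemma sl_concat: "sum_list (concat xss) = sum_list (map sum_list (xss::nat list list))"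
  by (induction xss) auto

lemma msum_Node: "msum (Node im c rs ks) = sum_list (map (\<lambda>(x,a,d). a) rs) + sum_list (map msum ks)"
  by (simp add: msum_def[abs_def] map_concat sl_concat comp_def)

lemma nkeys_Node: "nkeys (Node im c rs ks) = length rs + sum_list (map nkeys ks)"
  by (simp add: nkeys_def[abs_def] length_concat comp_def)

lemma child_le: "k \<in> set ks \<Longrightarrow> msum k \<le> msum (Node im c rs ks)"
proof -
  assume "k \<in> set ks"
  hence "msum k \<le> sum_list (map msum ks)" by (simp add: member_le_sum_list)
  thus ?thesis by (simp add: msum_Node)
qed

lemma upd_sum: "i < length xs \<Longrightarrow> sum_list (xs[i:=y]) + xs!i = sum_list xs + (y::nat)"
proof (induction xs arbitrary: i)
  case Nil then show ?case by simp
next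
  case (Cons a xs) then show ?case by (cases i) auto
qed

lemma fresh_inv: "gsat t \<Longrightarrow> fresh t \<Longrightarrow> msum t \<le> N \<Longrightarrow> inv N t"
proof (induction t)
  case Leaf then show ?case by simp
next
  case (Node im c rs ks)
  from Node.prems(1) obtain e where e: "e \<in> set rs" by (cases rs) auto
  obtain x a d where ed: "e = (x,a,d)" by (cases e) auto
  have "1 \<le> a" using Node.prems(1) e ed by auto
  moreover have "a \<le> sum_list (map (\<lambda>(x,a,d). a) rs)"
    using member_le_sum_list[of a "map (\<lambda>(x,a,d). a) rs"] e ed by force
  ultimately have "1 \<le> msum (Node im c rs ks)" by (simp add: msum_Node)
  moreover have "\<forall>k\<in>set ks. inv N k"
  proof
    fix k assume k: "k \<in> set ks"
    show "inv N k" using Node.IH[OF k] Node.prems child_le[OF k, of im c rs] k by auto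
  qed
  ultimately show ?case using Node.prems by auto
qed

lemma inv_mono: "inv N t \<Longrightarrow> N \<le> N' \<Longrightarrow> inv N' t"
  by (induction t) auto

lemma upd_entry_fst: "fst (upd_entry p e) = fst e"
  by (cases p; cases e) auto

lemma upd_entry_cnt: "(\<lambda>(x,a,d). a) e \<le> (\<lambda>(x,a,d). a) (upd_entry p e)"
  by (cases p; cases e) auto

lemma access_msum: "msum t \<le> msum (access p t)"
proof (induction p t rule: access.induct)
  case (4 p im c rs ks)
  show ?case
  proof (cases "opkey p \<in> fst ` set rs")
    case True
    have "sum_list (map (\<lambda>(x,a,d). a) rs)
       \<le> sum_list (map (\<lambda>(x,a,d). a) (map (\<lambda>e. if fst e = opkey p then upd_entry p e else e) rs))"
      unfolding map_map comp_def
      by (rule sum_list_mono) (auto simp: upd_entry_cnt)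
    then show ?thesis using True by (simp add: msum_Node)
  next
    case False
    define j where "j = child_idx (opkey p) rs"
    show ?thesis
    proof (cases "j < length ks")
      case True
      have ih: "msum (ks!j) \<le> msum (access p (ks!j))" using 4 False True j_def by auto
      have "sum_list (map msum (ks[j := access p (ks!j)])) + msum (ks!j)
          = sum_list (map msum ks) + msum (access p (ks!j))"
        using upd_sum[of j "map msum ks" "msum (access p (ks!j))"] True by (simp add: map_update)
      then show ?thesis using False True ih by (simp add: msum_Node j_def[symmetric] Let_def)
    next
      case c: False
      then show ?thesis using False by (simp add: msum_Node j_def[symmetric] Let_def)
    qed
  qed
qed (auto simp: msum_Node)

lemma access_inv: "inv N t \<Longrightarrow> msum (access p t) \<le> N' \<Longrightarrow> N \<le> N' \<Longrightarrow> inv N' (access p t)"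
proof (induction p t rule: access.induct)
  case (4 p im c rs ks)
  show ?case
  proof (cases "opkey p \<in> fst ` set rs")
    case True
    then show ?thesis using 4(2,4) inv_mono by auto
  next
    case False
    define j where "j = child_idx (opkey p) rs"
    show ?thesis
    proof (cases "j < length ks")
      case True
      let ?T = "Node im (c + 1) rs (ks[j := access p (ks ! j)])"
      have eq: "access p (Node im c rs ks) = ?T" using False True by (simp add: j_def Let_def)
      have mem: "access p (ks!j) \<in> set (ks[j := access p (ks ! j)])" using True
        by (simp add: set_update_memI)
      have "msum (access p (ks!j)) \<le> N'" using child_le[OF mem, of im "c+1" rs] 4(3) eq by simp
      hence ih: "inv N' (access p (ks!j))" using 4 False True j_def by auto
      have "\<forall>k\<in>set (ks[j := access p (ks ! j)]). inv N' k"
      proof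
        fix k assume "k \<in> set (ks[j := access p (ks ! j)])"
        hence "k = access p (ks ! j) \<or> k \<in> set ks"
          using set_update_subset_insert[of ks j "access p (ks ! j)"] by blast
        thus "inv N' k"
        proof
          assume "k \<in> set ks"
          hence "inv N k" using 4(2) by simp
          thus ?thesis using inv_mono 4(4) by blast
        qed (use ih in simp)
      qed
      then show ?thesis using eq 4(2,4) by auto
    next
      case c: False
      then show ?thesis using False 4(2,4) inv_mono by (auto simp: j_def[symmetric] Let_def)
    qed
  qed
qed (simp_all add: msum_Node)

lemma rebuild_msum: "rebuild_of t t' \<Longrightarrow> msum t' \<le> msum t"
proof -
  assume r: "rebuild_of t t'"
  let ?f = "\<lambda>(x::int, a::nat, d::bool). (x, a)"
  let ?P = "\<lambda>(x::int, a::nat, d::bool). \<not> d"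
  have eq: "mset (map ?f (entries t')) = mset (map ?f (filter ?P (entries t)))"
    using r by (simp add: rebuild_of_def)
  have h: "\<And>xs. sum_list (map (\<lambda>(x,a,d). a) xs) = sum_mset (image_mset snd (mset (map ?f xs)))"
  proof -
    fix xs :: "(int \<times> nat \<times> bool) list"
    show "sum_list (map (\<lambda>(x,a,d). a) xs) = sum_mset (image_mset snd (mset (map ?f xs)))"
      by (induction xs) auto
  qed
  have "msum t' = sum_list (map (\<lambda>(x,a,d). a) (filter ?P (entries t)))"
    unfolding msum_def h eq ..
  also have "\<dots> \<le> msum t" unfolding msum_def by (rule sum_list_filter_le_nat)
  finally show ?thesis .
qed

lemma settle_inv: "settle x t t' \<Longrightarrow> inv N t \<Longrightarrow> msum t \<le> N \<Longrightarrow> inv N t' \<and> msum t' \<le> msum t"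
proof (induction rule: settle.induct)
  case leaf then show ?case by simp
next
  case (rebuild c im rs ks t')
  have m: "msum t' \<le> msum (Node im c rs ks)" using rebuild_msum[OF rebuild(2)] .
  then show ?case using fresh_inv[of t' N] rebuild by (auto simp: rebuild_of_def)
next
  case (found c im x rs ks) then show ?case by simp
next
  case (down c im x rs ks t')
  define j where "j = child_idx x rs"
  have jl: "j < length ks" using down j_def by simp
  have mem: "ks!j \<in> set ks" using jl by simp
  have ih: "inv N t' \<and> msum t' \<le> msum (ks!j)"
    using down.IH down.prems child_le[OF mem, of im c rs] mem j_def by auto
  have "\<forall>k\<in>set (ks[j := t']). inv N k"
    using set_update_subset_insert[of ks j t'] ih down.prems by auto
  moreover have "sum_list (map msum (ks[j := t'])) + msum (ks!j) = sum_list (map msum ks) + msum t'"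
    using upd_sum[of j "map msum ks" "msum t'"] jl by (simp add: map_update)
  ultimately show ?case using down.prems ih by (auto simp: msum_Node j_def[symmetric])
qed

lemma reach_inv: "reach t M \<Longrightarrow> inv M t \<and> msum t \<le> M"
proof (induction rule: reach.induct)
  case (init t) then show ?case using fresh_inv by auto
next
  case (step t M p t')
  let ?M' = "M + (msum (access p t) - msum t)"
  have a: "msum t \<le> msum (access p t)" by (rule access_msum)
  have "inv ?M' (access p t)" using access_inv[of M t p ?M'] step a by auto
  moreover have "msum (access p t) \<le> ?M'" using a step by auto
  ultimately show ?case using settle_inv[OF step(2), of ?M'] by auto
qed

lemma mem_bound:
  assumes "0 \<le> \<alpha>"
  shows "inv N t \<Longrightarrow> real (mem \<alpha> t) \<le> 9 * real N powr \<alpha> * real (nkeys t)"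
proof (induction t)
  case Leaf then show ?case by (simp add: nkeys_def)
next
  case (Node im c rs ks)
  let ?P = "real N powr \<alpha>"
  have im1: "1 \<le> im" and imN: "im \<le> N" using Node.prems by auto
  have P1: "1 \<le> ?P" using im1 imN assms by (simp add: ge_one_powr_ge_zero)
  have "real im powr \<alpha> \<le> ?P" using im1 imN assms by (simp add: powr_mono2)
  moreover have "of_int \<lceil>real im powr \<alpha>\<rceil> \<le> real im powr \<alpha> + 1"
    by (simp add: of_int_ceiling_le_add_one)
  moreover have "0 \<le> \<lceil>real im powr \<alpha>\<rceil>" by (simp add: order.strict_trans2[of _ 0])
  ultimately have c1: "real (nat \<lceil>real im powr \<alpha>\<rceil>) \<le> ?P + 1" by linarith
  have rs1: "1 \<le> length rs" using Node.prems by (cases rs) auto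
  have ks: "length ks = length rs + 1" using Node.prems by auto
  have "real (sum_list (map (mem \<alpha>) ks)) = sum_list (map (\<lambda>k. real (mem \<alpha> k)) ks)"
    by (induction ks) auto
  also have "\<dots> \<le> sum_list (map (\<lambda>k. 9 * ?P * real (nkeys k)) ks)"
  proof (rule sum_list_mono)
    fix k assume k: "k \<in> set ks"
    hence "inv N k" using Node.prems by simp
    thus "real (mem \<alpha> k) \<le> 9 * ?P * real (nkeys k)" by (rule Node.IH[OF k])
  qed
  also have "\<dots> = 9 * ?P * real (sum_list (map nkeys ks))"
    by (induction ks) (auto simp: algebra_simps)
  finally have s: "real (sum_list (map (mem \<alpha>) ks)) \<le> 9 * ?P * real (sum_list (map nkeys ks))" .
  have "real (3 * length rs + length ks + 2) \<le> 7 * ?P * real (length rs)"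
  proof -
    have "real (3 * length rs + length ks + 2) \<le> 7 * real (length rs)" using ks rs1 by simp
    also have "\<dots> = 7 * real (length rs) * 1" by simp
    also have "\<dots> \<le> 7 * real (length rs) * ?P" by (rule mult_left_mono[OF P1]) simp
    finally show ?thesis by (simp add: algebra_simps)
  qed
  moreover have "?P + 1 \<le> 2 * ?P * real (length rs)"
  proof -
    have "?P + 1 \<le> 2 * ?P * 1" using P1 by simp
    also have "\<dots> \<le> 2 * ?P * real (length rs)" by (rule mult_left_mono) (use P1 rs1 in auto)
    finally show ?thesis .
  qed
  ultimately show ?case using c1 s by (simp add: nkeys_Node algebra_simps)
qed

theorem theorem6:
  fixes \<alpha> :: real
  assumes "1/2 \<le> \<alpha>" and "\<alpha> < 1"
  shows "\<exists>C > 0. \<forall>t M. reach t M \<longrightarrow>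
           real (mem \<alpha> t) \<le> C * real M powr \<alpha> * real (nkeys t)"
proof (intro exI[of _ 9] conjI allI impI)
  fix t M assume "reach t M"
  then show "real (mem \<alpha> t) \<le> 9 * real M powr \<alpha> * real (nkeys t)"
    using reach_inv mem_bound[of \<alpha>] assms by auto
qed simp

end
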